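(* Let $T>0$ and let $f:\Omega\times[0,T]\times\mathbb{R}\times\mathbb{R}^d\to\mathbb{R}$ satisfy: for every $(y,z)$, $f(\cdot,y,z)\in L^2_{\mathcal{F}}(0,T)$, and there is $\mu>0$ with $|f(t,y,z)-f(t,\bar y,\bar z)|\le\mu(|y-\bar y|+|z-\bar z|)$ for all $y,\bar y\in\mathbb{R}$, $z,\bar z\in\mathbb{R}^d$. For $(t,y,z)\in[0,T]\times\mathbb{R}\times\mathbb{R}^d$ let $(Y^{t,y,z}_s)_{s\in[t,T]}$ be the solution of $Y^{t,y,z}_s=y-\int_t^s f(r,Y^{t,y,z}_r,z)\,dr+z\cdot(B_s-B_t)$, $s\in[t,T]$. For $n\ge1$ set $t^n_i=i2^{-n}T$, $i=0,\dots,2^n$, and $f^n(s,y,z):=\sum_{i=0}^{2^n-1}f(s,Y^{t^n_i,y,z}_s,z)\,\mathbf{1}_{[t^n_i,t^n_{i+1})}(s)$, $s\in[0,T]$. Then for each fixed $(y,z)\in\mathbb{R}\times\mathbb{R}^d$, $\lim_{n\to\infty}E\int_0^T|f^n(s,y,z)-f(s,y,z)|^2ds=0$.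
   Context: Let $(\Omega,\mathcal{F},P)$ be a probability space carrying a $d$-dimensional Brownian motion $(B_t)_{t\ge0}$, and let $\mathcal{F}_t=\sigma\{B_s, s\le t\}$ be its natural filtration. $L^2_{\mathcal{F}}(0,T)$ denotes the space of $(\mathcal{F}_t)$-adapted real processes $\phi$ with $E\int_0^T|\phi_s|^2ds<\infty$. *)

theory Defs
  imports "HOL-Probability.Probability"
begin

definition brownian_motion :: "'a measure \<Rightarrow> (real \<Rightarrow> 'a \<Rightarrow> real^'d) \<Rightarrow> bool" where
  "brownian_motion M B \<longleftrightarrow>
     prob_space M \<and>
     (\<forall>t. B t \<in> borel_measurable M) \<and>
     (\<forall>\<omega>\<in>space M. B 0 \<omega> = 0) \<and>
     (\<forall>\<omega>\<in>space M. continuous_on {0..} (\<lambda>t. B t \<omega>)) \<and>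
     (\<forall>s t. 0 \<le> s \<and> s < t \<longrightarrow>
        (\<forall>i. distributed M lborel (\<lambda>\<omega>. (B t \<omega> - B s \<omega>) $ i) (normal_density 0 (sqrt (t - s)))) \<and>
        prob_space.indep_vars M (\<lambda>_. borel) (\<lambda>i \<omega>. (B t \<omega> - B s \<omega>) $ i) UNIV) \<and>
     (\<forall>(n::nat) (ts::nat \<Rightarrow> real). 0 \<le> ts 0 \<and> (\<forall>i<n. ts i \<le> ts (Suc i)) \<longrightarrow>
        prob_space.indep_vars M (\<lambda>_. borel) (\<lambda>i \<omega>. B (ts (Suc i)) \<omega> - B (ts i) \<omega>) {..<n})"

definition nat_filtration :: "'a measure \<Rightarrow> (real \<Rightarrow> 'a \<Rightarrow> real^'d) \<Rightarrow> real \<Rightarrow> 'a measure" where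
  "nat_filtration M B t =
     sigma (space M) (\<Union>s\<in>{0..t}. {B s -` A \<inter> space M | A. A \<in> sets (borel :: (real^'d) measure)})"

definition L2F :: "'a measure \<Rightarrow> (real \<Rightarrow> 'a \<Rightarrow> real^'d) \<Rightarrow> real \<Rightarrow> (real \<Rightarrow> 'a \<Rightarrow> real) \<Rightarrow> bool" where
  "L2F M B T \<phi> \<longleftrightarrow>
     (\<lambda>(s, \<omega>). \<phi> s \<omega>) \<in> borel_measurable (restrict_space lborel {0..T} \<Otimes>\<^sub>M M) \<and>
     (\<forall>t\<in>{0..T}. \<phi> t \<in> borel_measurable (nat_filtration M B t)) \<and>
     (\<integral>\<^sup>+\<omega>. (\<integral>\<^sup>+s. indicator {0..T} s * ennreal ((\<phi> s \<omega>)\<^sup>2) \<partial>lborel) \<partial>M) < \<infinity>"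

definition dyad :: "real \<Rightarrow> nat \<Rightarrow> nat \<Rightarrow> real" where
  "dyad T n i = real i * T / 2 ^ n"

text \<open>f^n(s,y,z) = sum_{i<2^n} f(s, Y^{t^n_i,y,z}_s, z) 1_{[t^n_i, t^n_{i+1})}(s).
  Arguments: f \<omega> s y z, and Y t y z s \<omega>.\<close>
definition fn_approx ::
  "('a \<Rightarrow> real \<Rightarrow> real \<Rightarrow> real^'d \<Rightarrow> real) \<Rightarrow> (real \<Rightarrow> real \<Rightarrow> real^'d \<Rightarrow> real \<Rightarrow> 'a \<Rightarrow> real)
    \<Rightarrow> real \<Rightarrow> nat \<Rightarrow> 'a \<Rightarrow> real \<Rightarrow> real \<Rightarrow> real^'d \<Rightarrow> real" where
  "fn_approx f Y T n \<omega> s y z =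
     (\<Sum>i<2^n. f \<omega> s (Y (dyad T n i) y z s \<omega>) z * indicator {dyad T n i..<dyad T n (Suc i)} s)"

end

theory Submission
  imports Defs
begin


lemma ind_enn: "ennreal (indicator A x * c) = indicator A x * ennreal c"
  by (simp split: split_indicator)

lemma restr_pair:
  fixes \<phi> :: "real \<times> 'a \<Rightarrow> real"
  assumes "\<phi> \<in> borel_measurable (restrict_space lborel {a..b} \<Otimes>\<^sub>M M)"
  shows "(\<lambda>x. indicator {a..b} (fst x) * \<phi> x) \<in> borel_measurable (lborel \<Otimes>\<^sub>M M)"
proof -
  have sp: "space (lborel \<Otimes>\<^sub>M M) = UNIV \<times> space M" by (simp add: space_pair_measure)
  have "(\<lambda>x. (fst x, snd x)) \<in> measurable (restrict_space (lborel \<Otimes>\<^sub>M M) ({a..b} \<times> space M))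
          (restrict_space lborel {a..b} \<Otimes>\<^sub>M M)"
  proof (rule measurable_Pair)
    show "fst \<in> measurable (restrict_space (lborel \<Otimes>\<^sub>M M) ({a..b} \<times> space M)) (restrict_space lborel {a..b})"
      apply (rule measurable_restrict_space2)
      apply (force simp: space_restrict_space sp)
      apply (rule measurable_restrict_space1)
      apply (rule measurable_fst)
      done
    show "snd \<in> measurable (restrict_space (lborel \<Otimes>\<^sub>M M) ({a..b} \<times> space M)) M"
      by (auto intro: measurable_restrict_space1)
  qed
  then have "\<phi> \<in> borel_measurable (restrict_space (lborel \<Otimes>\<^sub>M M) ({a..b} \<times> space M))"
    using measurable_compose[OF _ assms] by simp
  then have "(\<lambda>x. if x \<in> {a..b} \<times> space M then \<phi> x else 0) \<in> borel_measurable (lborel \<Otimes>\<^sub>M M)"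
    by (subst (asm) measurable_restrict_space_iff) (auto simp: sp)
  then show ?thesis
    by (rule measurable_cong[THEN iffD1, rotated]) (auto simp: sp split: split_indicator)
qed

lemma sec_meas:
  fixes \<phi> :: "real \<times> 'a \<Rightarrow> real"
  assumes "\<phi> \<in> borel_measurable (restrict_space lborel {a..b} \<Otimes>\<^sub>M M)" "\<omega> \<in> space M"
  shows "(\<lambda>s. indicator {a..b} s * \<phi> (s, \<omega>)) \<in> borel_measurable borel"
proof -
  have "(\<lambda>s. (s, \<omega>)) \<in> measurable lborel (lborel \<Otimes>\<^sub>M M)"
    using assms(2) by (rule measurable_Pair2')
  from measurable_compose[OF this restr_pair[OF assms(1)]]
  show ?thesis by simp
qed




lemma intconst: "a \<le> b \<Longrightarrow> (\<integral>\<^sup>+s. indicator {a..b} s * c \<partial>lborel) = c * ennreal (b - a)"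
  by (subst mult.commute) (simp add: nn_integral_cmult_indicator)

lemma cs_ind:
  fixes \<phi> :: "real \<Rightarrow> real"
  assumes m: "\<phi> \<in> borel_measurable borel" and ab: "a \<le> b"
  shows "(\<integral>\<^sup>+s. indicator {a..b} s * ennreal \<bar>\<phi> s\<bar> \<partial>lborel)^2
     \<le> ennreal (b-a) * (\<integral>\<^sup>+s. indicator {a..b} s * ennreal ((\<phi> s)^2) \<partial>lborel)"
proof -
  have m1: "(\<lambda>s. indicator {a..b} s :: ennreal) \<in> borel_measurable lborel" by measurable
  have m2: "(\<lambda>s. indicator {a..b} s * ennreal \<bar>\<phi> s\<bar>) \<in> borel_measurable lborel" using m by measurable
  from Cauchy_Schwarz_nn_integral[OF m1 m2]
  have "(\<integral>\<^sup>+s. indicator {a..b} s * (indicator {a..b} s * ennreal \<bar>\<phi> s\<bar>) \<partial>lborel)^2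
     \<le> (\<integral>\<^sup>+s. (indicator {a..b} s)^2 \<partial>lborel) * (\<integral>\<^sup>+s. (indicator {a..b} s * ennreal \<bar>\<phi> s\<bar>)^2 \<partial>lborel)" .
  moreover have "(\<lambda>s. indicator {a..b} s * (indicator {a..b} s * ennreal \<bar>\<phi> s\<bar>)) = (\<lambda>s. indicator {a..b} s * ennreal \<bar>\<phi> s\<bar>)"
    by (auto simp: fun_eq_iff split: split_indicator)
  moreover have "(\<lambda>s. (indicator {a..b} s :: ennreal)^2) = (\<lambda>s. indicator {a..b} s)"
    by (auto simp: fun_eq_iff split: split_indicator)
  moreover have "(\<lambda>s. (indicator {a..b} s * ennreal \<bar>\<phi> s\<bar>)^2) = (\<lambda>s. indicator {a..b} s * ennreal ((\<phi> s)^2))"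
    by (auto simp: fun_eq_iff ennreal_power power2_abs split: split_indicator)
  ultimately show ?thesis using ab by simp
qed

lemma sq3: fixes x y z :: real shows "(x+y+z)^2 \<le> 3*(x^2+y^2+z^2)"
proof -
  have "0 \<le> (x-y)^2+(y-z)^2+(x-z)^2" by simp
  then show ?thesis by (simp add: power2_eq_square algebra_simps)
qed

lemma core:
  fixes g0 F Yf \<beta> :: "real \<Rightarrow> real" and a h \<mu> y :: real
  assumes h: "0 < h" and mu: "0 \<le> \<mu>" and small: "\<mu>^2 * h^2 \<le> 1/6"
  and g0m: "g0 \<in> borel_measurable borel" and Ym: "Yf \<in> borel_measurable borel"
  and bc: "continuous_on {a..a+h} \<beta>"
  and Gfin: "(\<integral>\<^sup>+s. indicator {a..a+h} s * ennreal ((g0 s)^2) \<partial>lborel) < \<infinity>"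
  and Lip: "\<And>r. r \<in> {a..a+h} \<Longrightarrow> \<bar>F r - g0 r\<bar> \<le> \<mu> * \<bar>Yf r - y\<bar>"
  and sol: "\<And>s. s \<in> {a..a+h} \<Longrightarrow> set_integrable lborel {a..s} F \<and>
                 Yf s = y - (LINT r:{a..s}|lborel. F r) + \<beta> s"
  shows "(\<integral>\<^sup>+s. indicator {a..a+h} s * ennreal ((Yf s - y)^2) \<partial>lborel)
     \<le> ennreal (6*h^2) * (\<integral>\<^sup>+s. indicator {a..a+h} s * ennreal ((g0 s)^2) \<partial>lborel)
       + 6 * (\<integral>\<^sup>+s. indicator {a..a+h} s * ennreal ((\<beta> s)^2) \<partial>lborel)"
proof -
  define I where "I = {a..a+h}"
  define u where "u s = \<bar>Yf s - y\<bar>" for s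
  have um: "u \<in> borel_measurable borel" unfolding u_def using Ym by measurable
  have emI: "emeasure lborel I = ennreal h" using h by (simp add: I_def)
  obtain Bb where Bb: "\<And>s. s \<in> I \<Longrightarrow> \<bar>\<beta> s\<bar> \<le> Bb"
  proof -
    have "compact (\<beta> ` I)" unfolding I_def by (rule compact_continuous_image[OF bc compact_Icc])
    then have "bounded (\<beta> ` I)" by (rule compact_imp_bounded)
    then obtain B where "\<forall>x\<in>\<beta> ` I. norm x \<le> B" by (auto simp: bounded_iff)
    then show ?thesis using that by auto
  qed
  have Fint: "set_integrable lborel I F" using sol[of "a+h"] h by (simp add: I_def)
  define \<Phi> where "\<Phi> = (\<integral>\<^sup>+s. indicator I s * ennreal \<bar>F s\<bar> \<partial>lborel)"
  have Phifin: "\<Phi> < top"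
  proof -
    have "(\<integral>\<^sup>+x. ennreal (norm (indicator I x *\<^sub>R F x)) \<partial>lborel) < \<infinity>"
      using Fint unfolding set_integrable_def integrable_iff_bounded by simp
    moreover have "(\<lambda>x. ennreal (norm (indicator I x *\<^sub>R F x))) = (\<lambda>s. indicator I s * ennreal \<bar>F s\<bar>)"
      by (auto simp: fun_eq_iff split: split_indicator)
    ultimately show ?thesis by (simp add: \<Phi>_def)
  qed
  have intbnd: "ennreal \<bar>LINT r:{a..s}|lborel. F r\<bar> \<le> (\<integral>\<^sup>+r. indicator {a..s} r * ennreal \<bar>F r\<bar> \<partial>lborel)"
    if "s \<in> I" for s
  proof -
    have "set_integrable lborel {a..s} F" using sol that by (auto simp: I_def)
    then have "ennreal (norm (LINT r:{a..s}|lborel. F r)) \<le> (\<integral>\<^sup>+x. ennreal (norm (indicator {a..s} x *\<^sub>R F x)) \<partial>lborel)"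
      unfolding set_integrable_def set_lebesgue_integral_def by (rule integral_norm_bound_ennreal)
    moreover have "(\<lambda>x. ennreal (norm (indicator {a..s} x *\<^sub>R F x))) = (\<lambda>r. indicator {a..s} r * ennreal \<bar>F r\<bar>)"
      by (auto simp: fun_eq_iff split: split_indicator)
    ultimately show ?thesis by simp
  qed
  have sub: "{a..s} \<subseteq> I" if "s \<in> I" for s using that by (auto simp: I_def)
  have ubnd: "u s \<le> enn2real \<Phi> + Bb" if "s \<in> I" for s
  proof -
    have "ennreal \<bar>LINT r:{a..s}|lborel. F r\<bar> \<le> \<Phi>"
    proof -
      have "(\<integral>\<^sup>+r. indicator {a..s} r * ennreal \<bar>F r\<bar> \<partial>lborel) \<le> \<Phi>"
        unfolding \<Phi>_def using sub[OF that]
        by (intro nn_integral_mono mult_right_mono) (auto simp: indicator_def)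
      then show ?thesis using intbnd[OF that] by (rule order_trans[rotated])
    qed
    then have "\<bar>LINT r:{a..s}|lborel. F r\<bar> \<le> enn2real \<Phi>"
      using enn2real_mono[OF _ Phifin] by fastforce
    moreover have "u s \<le> \<bar>LINT r:{a..s}|lborel. F r\<bar> + \<bar>\<beta> s\<bar>"
      using sol[of s] that by (auto simp: u_def I_def)
    ultimately show ?thesis using Bb[OF that] by linarith
  qed
  define K where "K = enn2real \<Phi> + Bb"
  define U where "U = (\<integral>\<^sup>+s. indicator I s * ennreal ((u s)^2) \<partial>lborel)"
  define G where "G = (\<integral>\<^sup>+s. indicator I s * ennreal ((g0 s)^2) \<partial>lborel)"
  define W where "W = (\<integral>\<^sup>+s. indicator I s * ennreal ((\<beta> s)^2) \<partial>lborel)"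
  define A where "A = (\<integral>\<^sup>+s. indicator I s * ennreal \<bar>g0 s\<bar> \<partial>lborel)"
  define V where "V = (\<integral>\<^sup>+s. indicator I s * ennreal \<bar>u s\<bar> \<partial>lborel)"
  have Ufin: "U < top"
  proof -
    have "U \<le> (\<integral>\<^sup>+s. indicator I s * ennreal (K^2) \<partial>lborel)"
      unfolding U_def
    proof (rule nn_integral_mono)
      fix s :: real
      show "indicator I s * ennreal ((u s)^2) \<le> indicator I s * ennreal (K^2)"
      proof (cases "s \<in> I")
        case True
        have "0 \<le> u s" by (simp add: u_def)
        then have "(u s)^2 \<le> K^2" using ubnd[OF True] unfolding K_def by (intro power_mono) auto
        then show ?thesis by (intro mult_left_mono ennreal_leI) auto
      qed simp
    qed
    also have "\<dots> = ennreal (K^2) * ennreal h" unfolding I_def using h by (subst intconst) auto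
    finally show ?thesis by (metis ennreal_less_top ennreal_mult_less_top le_less_trans)
  qed
  have Gfin': "G < top" using Gfin by (simp add: G_def I_def)
  have csA: "A^2 \<le> ennreal h * G" unfolding A_def G_def I_def using cs_ind[OF g0m, of a "a+h"] h by simp
  have csV: "V^2 \<le> ennreal h * U" unfolding V_def U_def I_def using cs_ind[OF um, of a "a+h"] h
    by (simp add: u_def)
  have hGfin: "ennreal h * G < top" using Gfin' by (simp add: ennreal_mult_less_top)
  have hUfin: "ennreal h * U < top" using Ufin by (simp add: ennreal_mult_less_top)
  have Afin: "A < top"
  proof -
    have "A^2 < top" using csA hGfin by (rule le_less_trans)
    then show ?thesis by (simp add: power_less_top_ennreal)
  qed
  have Vfin: "V < top"
  proof -
    have "V^2 < top" using csV hUfin by (rule le_less_trans)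
    then show ?thesis by (simp add: power_less_top_ennreal)
  qed
  have mg: "(\<lambda>r. indicator I r * ennreal \<bar>g0 r\<bar>) \<in> borel_measurable lborel" using g0m unfolding I_def measurable_lborel2 by measurable
  have mu': "(\<lambda>r. indicator I r * ennreal \<bar>u r\<bar>) \<in> borel_measurable lborel" using um unfolding I_def measurable_lborel2 by measurable
  have mb: "(\<lambda>r. indicator I r * ennreal ((\<beta> r)^2)) \<in> borel_measurable lborel"
  proof -
    have "(\<lambda>x. indicator I x *\<^sub>R \<beta> x) \<in> borel_measurable borel"
      using bc unfolding I_def by (intro borel_measurable_continuous_on_indicator) auto
    then have "(\<lambda>x. ennreal ((indicator I x *\<^sub>R \<beta> x)^2)) \<in> borel_measurable lborel" unfolding measurable_lborel2 by measurable
    moreover have "(\<lambda>x. ennreal ((indicator I x *\<^sub>R \<beta> x)^2)) = (\<lambda>r. indicator I r * ennreal ((\<beta> r)^2))"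
      by (auto simp: fun_eq_iff split: split_indicator)
    ultimately show ?thesis by metis
  qed
  have pw: "ennreal (u s) \<le> A + ennreal \<mu> * V + ennreal \<bar>\<beta> s\<bar>" if s: "s \<in> I" for s
  proof -
    have "(\<integral>\<^sup>+r. indicator {a..s} r * ennreal \<bar>F r\<bar> \<partial>lborel)
        \<le> (\<integral>\<^sup>+r. indicator I r * ennreal \<bar>g0 r\<bar> + ennreal \<mu> * (indicator I r * ennreal \<bar>u r\<bar>) \<partial>lborel)"
    proof (rule nn_integral_mono)
      fix r :: real
      show "indicator {a..s} r * ennreal \<bar>F r\<bar> \<le> indicator I r * ennreal \<bar>g0 r\<bar> + ennreal \<mu> * (indicator I r * ennreal \<bar>u r\<bar>)"
      proof (cases "r \<in> {a..s}")
        case True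
        then have rI: "r \<in> I" using sub[OF s] by auto
        have "\<bar>F r\<bar> \<le> \<bar>g0 r\<bar> + \<mu> * \<bar>u r\<bar>" using Lip[of r] rI by (auto simp: I_def u_def)
        then have "ennreal \<bar>F r\<bar> \<le> ennreal (\<bar>g0 r\<bar> + \<mu> * \<bar>u r\<bar>)" by (rule ennreal_leI)
        also have "\<dots> = ennreal \<bar>g0 r\<bar> + ennreal \<mu> * ennreal \<bar>u r\<bar>"
          using mu by (simp add: ennreal_plus ennreal_mult)
        finally show ?thesis using True rI by simp
      qed simp
    qed
    also have "\<dots> = A + ennreal \<mu> * V"
      unfolding A_def V_def using mg mu' by (simp add: nn_integral_add nn_integral_cmult)
    finally have "ennreal \<bar>LINT r:{a..s}|lborel. F r\<bar> \<le> A + ennreal \<mu> * V"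
      using intbnd[OF s] by (rule order_trans[rotated])
    moreover have "u s \<le> \<bar>LINT r:{a..s}|lborel. F r\<bar> + \<bar>\<beta> s\<bar>"
      using sol[of s] s by (auto simp: u_def I_def)
    then have "ennreal (u s) \<le> ennreal \<bar>LINT r:{a..s}|lborel. F r\<bar> + ennreal \<bar>\<beta> s\<bar>"
      by (metis abs_ge_zero ennreal_leI ennreal_plus)
    ultimately show ?thesis by (meson add_mono order_refl order_trans)
  qed
  define a' where "a' = enn2real A"
  define v' where "v' = enn2real V"
  define g' where "g' = enn2real G"
  define U' where "U' = enn2real U"
  have A_eq: "A = ennreal a'" unfolding a'_def using Afin by simp
  have V_eq: "V = ennreal v'" unfolding v'_def using Vfin by simp
  have G_eq: "G = ennreal g'" unfolding g'_def using Gfin' by simp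
  have U_eq: "U = ennreal U'" unfolding U'_def using Ufin by simp
  have nn: "0 \<le> a'" "0 \<le> v'" "0 \<le> g'" "0 \<le> U'" by (auto simp: a'_def v'_def g'_def U'_def)
  have rpw: "u s \<le> a' + \<mu> * v' + \<bar>\<beta> s\<bar>" if "s \<in> I" for s
  proof -
    have "ennreal (u s) \<le> ennreal (a' + \<mu> * v' + \<bar>\<beta> s\<bar>)"
      using pw[OF that] nn mu by (simp add: A_eq V_eq ennreal_plus ennreal_mult)
    then show ?thesis using nn mu by (subst (asm) ennreal_le_iff) auto
  qed
  have ra: "a'^2 \<le> h * g'"
  proof -
    have "ennreal (a'^2) \<le> ennreal (h * g')"
      using csA nn h by (simp add: A_eq G_eq ennreal_power ennreal_mult)
    then show ?thesis using nn h by (subst (asm) ennreal_le_iff) auto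
  qed
  have rv: "v'^2 \<le> h * U'"
  proof -
    have "ennreal (v'^2) \<le> ennreal (h * U')"
      using csV nn h by (simp add: V_eq U_eq ennreal_power ennreal_mult)
    then show ?thesis using nn h by (subst (asm) ennreal_le_iff) auto
  qed
  define c where "c = 3*h*g' + 3*\<mu>^2*h*U'"
  have pw2: "(u s)^2 \<le> c + 3*(\<beta> s)^2" if "s \<in> I" for s
  proof -
    have "0 \<le> u s" by (simp add: u_def)
    then have "(u s)^2 \<le> (a' + \<mu> * v' + \<bar>\<beta> s\<bar>)^2" using rpw[OF that] by (intro power_mono) auto
    also have "\<dots> \<le> 3*(a'^2 + (\<mu> * v')^2 + \<bar>\<beta> s\<bar>^2)" by (rule sq3)
    also have "(\<mu> * v')^2 = \<mu>^2 * v'^2" by (simp add: power_mult_distrib)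
    also have "\<mu>^2 * v'^2 \<le> \<mu>^2 * (h * U')" using rv by (intro mult_left_mono) auto
    finally show ?thesis unfolding c_def using ra by (simp add: algebra_simps)
  qed
  have "U \<le> (\<integral>\<^sup>+s. indicator I s * ennreal c + 3 * (indicator I s * ennreal ((\<beta> s)^2)) \<partial>lborel)"
    unfolding U_def
  proof (rule nn_integral_mono)
    fix s :: real
    show "indicator I s * ennreal ((u s)^2) \<le> indicator I s * ennreal c + 3 * (indicator I s * ennreal ((\<beta> s)^2))"
    proof (cases "s \<in> I")
      case True
      have "ennreal ((u s)^2) \<le> ennreal (c + 3*(\<beta> s)^2)" using pw2[OF True] by (rule ennreal_leI)
      also have "\<dots> = ennreal c + 3 * ennreal ((\<beta> s)^2)"
        using nn mu h by (simp add: c_def ennreal_plus ennreal_mult)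
      finally show ?thesis using True by simp
    qed simp
  qed
  also have "\<dots> = (\<integral>\<^sup>+s. indicator I s * ennreal c \<partial>lborel) + 3 * W"
  proof -
    have mc: "(\<lambda>s. indicator I s * ennreal c) \<in> borel_measurable lborel" unfolding I_def by measurable
    have mb3: "(\<lambda>s. 3 * (indicator I s * ennreal ((\<beta> s)^2))) \<in> borel_measurable lborel" using mb by measurable
    show ?thesis unfolding W_def
      by (subst nn_integral_add[OF mc mb3]) (simp add: nn_integral_cmult[OF mb])
  qed
  also have "(\<integral>\<^sup>+s. indicator I s * ennreal c \<partial>lborel) = ennreal c * ennreal h"
    unfolding I_def using h by (subst intconst) auto
  finally have Ub: "U \<le> ennreal c * ennreal h + 3 * W" .
  have goalU: "U \<le> ennreal (6*h^2) * G + 6 * W"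
  proof (cases "W < top")
    case False
    then have "W = top" using top.not_eq_extremum by blast
    then have "6 * W = top" by (simp add: ennreal_mult_eq_top_iff)
    then show ?thesis by simp
  next
    case True
    define w' where "w' = enn2real W"
    have W_eq: "W = ennreal w'" unfolding w'_def using True by simp
    have w0: "0 \<le> w'" by (simp add: w'_def)
    have "ennreal U' \<le> ennreal (c * h + 3 * w')"
      using Ub nn h mu w0 by (simp add: U_eq W_eq c_def ennreal_plus ennreal_mult)
    then have r1: "U' \<le> c * h + 3 * w'" using nn h mu w0 unfolding c_def
      by (subst (asm) ennreal_le_iff) (auto intro!: add_nonneg_nonneg mult_nonneg_nonneg)
    have ch: "c * h = 3*h^2*g' + 3*(\<mu>^2*h^2)*U'" by (simp add: c_def power2_eq_square algebra_simps)
    have "(\<mu>^2*h^2)*U' \<le> (1/6)*U'" using small nn by (intro mult_right_mono) auto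
    then have "U' \<le> 6*h^2*g' + 6*w'" using r1 ch by linarith
    then have "ennreal U' \<le> ennreal (6*h^2*g' + 6*w')" by (rule ennreal_leI)
    also have "\<dots> = ennreal (6*h^2) * G + 6 * W"
      using nn w0 by (simp add: G_eq W_eq ennreal_plus ennreal_mult)
    finally show ?thesis by (simp add: U_eq)
  qed
  have "U = (\<integral>\<^sup>+s. indicator {a..a+h} s * ennreal ((Yf s - y)^2) \<partial>lborel)"
    unfolding U_def I_def u_def by (simp add: power2_abs)
  then show ?thesis using goalU by (simp add: G_def W_def I_def)
qed



lemma norm_sq_vec: fixes x :: "real^'d" shows "(norm x)^2 = (\<Sum>j\<in>UNIV. (x$j)^2)"
  unfolding norm_vec_def L2_set_def by (simp add: sum_nonneg)

lemma normal_sq: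
  assumes D: "distributed M lborel X (normal_density 0 \<sigma>)" and s: "0 < \<sigma>"
  shows "(\<integral>\<^sup>+\<omega>. ennreal ((X \<omega>)^2) \<partial>M) = ennreal (\<sigma>^2)"
proof -
  have "(\<integral>\<^sup>+x. ennreal (normal_density 0 \<sigma> x) * ennreal (x^2) \<partial>lborel) = (\<integral>\<^sup>+\<omega>. ennreal ((X \<omega>)^2) \<partial>M)"
    using D by (intro distributed_nn_integral) auto
  moreover have "(\<integral>\<^sup>+x. ennreal (normal_density 0 \<sigma> x) * ennreal (x^2) \<partial>lborel)
     = (\<integral>\<^sup>+x. ennreal (normal_density 0 \<sigma> x * (x - 0)^(2*1)) \<partial>lborel)"
    by (intro nn_integral_cong) (simp add: ennreal_mult normal_density_nonneg)
  moreover have "\<dots> = ennreal (fact (2 * 1) / ((2 / \<sigma>\<^sup>2)^1 * fact 1))"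
  proof -
    have hb: "has_bochner_integral lborel (\<lambda>x. normal_density 0 \<sigma> x * (x - 0)^(2*1)) (fact (2 * 1) / ((2 / \<sigma>\<^sup>2)^1 * fact 1))"
      using normal_moment_even[OF s, where k=1 and \<mu>=0] .
    show ?thesis
      by (subst nn_integral_eq_integral[OF integrable.intros[OF hb]])
         (use has_bochner_integral_integral_eq[OF hb] in \<open>auto simp: normal_density_nonneg\<close>)
  qed
  moreover have "fact (2 * 1) / ((2 / \<sigma>\<^sup>2)^1 * fact 1) = \<sigma>^2" using s by simp
  ultimately show ?thesis by simp
qed

lemma bm_moment:
  fixes B :: "real \<Rightarrow> 'a \<Rightarrow> real^'d"
  assumes BM: "brownian_motion M B" and t: "0 \<le> t" "t \<le> s"
  shows "(\<integral>\<^sup>+\<omega>. ennreal ((norm (B s \<omega> - B t \<omega>))^2) \<partial>M) = ennreal (real CARD('d) * (s - t))"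
proof (cases "t = s")
  case True then show ?thesis by simp
next
  case False
  then have ts: "t < s" using t by simp
  have meas: "\<And>r. B r \<in> borel_measurable M" using BM unfolding brownian_motion_def by auto
  have D: "\<And>j. distributed M lborel (\<lambda>\<omega>. (B s \<omega> - B t \<omega>) $ j) (normal_density 0 (sqrt (s - t)))"
    using BM ts t unfolding brownian_motion_def by auto
  have "(\<integral>\<^sup>+\<omega>. ennreal ((norm (B s \<omega> - B t \<omega>))^2) \<partial>M)
      = (\<integral>\<^sup>+\<omega>. (\<Sum>j\<in>UNIV. ennreal (((B s \<omega> - B t \<omega>) $ j)^2)) \<partial>M)"
    by (intro nn_integral_cong) (simp add: norm_sq_vec)
  also have "\<dots> = (\<Sum>j\<in>UNIV. (\<integral>\<^sup>+\<omega>. ennreal (((B s \<omega> - B t \<omega>) $ j)^2) \<partial>M))"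
  proof (intro nn_integral_sum)
    fix j :: 'd
    have vm: "(\<lambda>x::real^'d. x$j) \<in> borel_measurable borel"
      by (intro borel_measurable_continuous_onI continuous_on_component continuous_on_id)
    have "(\<lambda>\<omega>. B s \<omega> - B t \<omega>) \<in> borel_measurable M" using meas by measurable
    from measurable_compose[OF this vm]
    show "(\<lambda>\<omega>. ennreal (((B s \<omega> - B t \<omega>) $ j)^2)) \<in> borel_measurable M" by measurable
  qed
  also have "\<dots> = (\<Sum>j\<in>(UNIV::'d set). ennreal (s - t))"
  proof (intro sum.cong refl)
    fix j :: 'd
    have "sqrt (s - t) > 0" using ts by simp
    from normal_sq[OF D[of j] this]
    show "(\<integral>\<^sup>+\<omega>. ennreal (((B s \<omega> - B t \<omega>) $ j)^2) \<partial>M) = ennreal (s - t)" using ts by simp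
  qed
  also have "\<dots> = ennreal (real CARD('d) * (s - t))"
    using ts by (simp add: ennreal_mult ennreal_of_nat_eq_real_of_nat)
  finally show ?thesis .
qed



lemma dyadic_floor_lim:
  fixes s :: real
  shows "(\<lambda>k. real_of_int \<lfloor>s * 2^k\<rfloor> / 2^k) \<longlonglongrightarrow> s"
proof (rule tendsto_sandwich[of "\<lambda>k. s - (1/2)^k" _ _ "\<lambda>k. s"])
  show "\<forall>\<^sub>F k in sequentially. s - (1/2)^k \<le> real_of_int \<lfloor>s * 2^k\<rfloor> / 2^k"
  proof (intro always_eventually allI)
    fix k :: nat
    have "s * 2^k < real_of_int \<lfloor>s * 2^k\<rfloor> + 1" by linarith
    then have "s * 2^k - 1 \<le> real_of_int \<lfloor>s * 2^k\<rfloor>" by linarith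
    then have "(s * 2^k - 1) / 2^k \<le> real_of_int \<lfloor>s * 2^k\<rfloor> / 2^k" by (intro divide_right_mono) auto
    moreover have "(s * 2^k - 1) / 2^k = s - (1/2)^k" by (simp add: field_simps power_one_over)
    ultimately show "s - (1/2)^k \<le> real_of_int \<lfloor>s * 2^k\<rfloor> / 2^k" by simp
  qed
  show "\<forall>\<^sub>F k in sequentially. real_of_int \<lfloor>s * 2^k\<rfloor> / 2^k \<le> s"
  proof (intro always_eventually allI)
    fix k :: nat
    have "real_of_int \<lfloor>s * 2^k\<rfloor> \<le> s * 2^k" by linarith
    then show "real_of_int \<lfloor>s * 2^k\<rfloor> / 2^k \<le> s" by (simp add: divide_le_eq)
  qed
  have "(\<lambda>k. s - (1/2::real)^k) \<longlonglongrightarrow> s - 0"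
    by (intro tendsto_diff tendsto_const LIMSEQ_power_zero) auto
  then show "(\<lambda>k. s - (1/2::real)^k) \<longlonglongrightarrow> s" by simp
qed simp

lemma B_joint:
  fixes B :: "real \<Rightarrow> 'a \<Rightarrow> real^'d"
  assumes BM: "brownian_motion M B"
  shows "(\<lambda>p. B (max 0 (fst p)) (snd p)) \<in> borel_measurable (lborel \<Otimes>\<^sub>M M)"
proof (rule borel_measurable_LIMSEQ_metric[where f="\<lambda>k (p::real \<times> 'a). B (max 0 (real_of_int \<lfloor>fst p * (2::real)^k\<rfloor> / 2^k)) (snd p)"])
  have meas: "\<And>r. B r \<in> borel_measurable M" using BM unfolding brownian_motion_def by auto
  have cont: "\<And>\<omega>. \<omega> \<in> space M \<Longrightarrow> continuous_on {0..} (\<lambda>t. B t \<omega>)"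
    using BM unfolding brownian_motion_def by auto
  fix k :: nat
  show "(\<lambda>p::real \<times> 'a. B (max 0 (real_of_int \<lfloor>fst p * (2::real)^k\<rfloor> / 2^k)) (snd p)) \<in> borel_measurable (lborel \<Otimes>\<^sub>M M)"
  proof (rule measurable_compose_countable[where f="\<lambda>i p. B (max 0 (real_of_int i / 2^k)) (snd p)"
        and g="\<lambda>p. \<lfloor>fst p * (2::real)^k\<rfloor>"])
    fix i :: int
    show "(\<lambda>p. B (max 0 (real_of_int i / 2^k)) (snd p)) \<in> borel_measurable (lborel \<Otimes>\<^sub>M M)"
      using meas by measurable
  next
    have "(\<lambda>p::real \<times> 'a. fst p * (2::real)^k) \<in> borel_measurable (lborel \<Otimes>\<^sub>M M)" by measurable
    from measurable_compose[OF this measurable_real_floor]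
    show "(\<lambda>p::real \<times> 'a. \<lfloor>fst p * (2::real)^k\<rfloor>) \<in> measurable (lborel \<Otimes>\<^sub>M M) (count_space UNIV)"
      by simp
  qed
next
  have cont: "\<And>\<omega>. \<omega> \<in> space M \<Longrightarrow> continuous_on {0..} (\<lambda>t. B t \<omega>)"
    using BM unfolding brownian_motion_def by auto
  fix p :: "real \<times> 'a" assume p: "p \<in> space (lborel \<Otimes>\<^sub>M M)"
  then have \<omega>: "snd p \<in> space M" by (auto simp: space_pair_measure)
  have "(\<lambda>k. max 0 (real_of_int \<lfloor>fst p * 2^k\<rfloor> / 2^k)) \<longlonglongrightarrow> max 0 (fst p)"
    by (intro tendsto_max tendsto_const dyadic_floor_lim)
  then show "(\<lambda>k. B (max 0 (real_of_int \<lfloor>fst p * 2^k\<rfloor> / 2^k)) (snd p)) \<longlonglongrightarrow> B (max 0 (fst p)) (snd p)"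
    by (rule continuous_on_tendsto_compose[OF cont[OF \<omega>]]) auto
qed

lemma pick:
  fixes hn s :: real and N :: nat
  assumes hn: "0 < hn" and s: "0 \<le> s" "s < real N * hn"
  shows "\<exists>k<N. real k * hn \<le> s \<and> s < real k * hn + hn \<and>
           (\<forall>i. real i * hn \<le> s \<and> s < real i * hn + hn \<longrightarrow> i = k)"
proof -
  define k where "k = nat \<lfloor>s / hn\<rfloor>"
  have fl0: "0 \<le> \<lfloor>s / hn\<rfloor>" using s hn by simp
  then have kf: "real k = real_of_int \<lfloor>s / hn\<rfloor>" by (simp add: k_def)
  have "real_of_int \<lfloor>s / hn\<rfloor> \<le> s / hn" by (rule of_int_floor_le)
  then have "real_of_int \<lfloor>s / hn\<rfloor> * hn \<le> s" by (subst (asm) pos_le_divide_eq[OF hn])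
  then have k1: "real k * hn \<le> s" by (simp only: kf)
  have "s / hn < real_of_int \<lfloor>s / hn\<rfloor> + 1" by (rule real_of_int_floor_add_one_gt)
  then have "s < (real_of_int \<lfloor>s / hn\<rfloor> + 1) * hn" by (subst (asm) pos_divide_less_eq[OF hn])
  then have "s < (real k + 1) * hn" by (simp only: kf)
  then have k2: "s < real k * hn + hn" by (simp add: distrib_right)
  have "s / hn < real N" using s(2) by (subst pos_divide_less_eq[OF hn])
  then have "real k < real N" using kf \<open>real_of_int \<lfloor>s / hn\<rfloor> \<le> s / hn\<close> by linarith
  then have k3: "k < N" by simp
  have uniq: "i = k" if "real i * hn \<le> s" "s < real i * hn + hn" for i
  proof -
    have "real i \<le> s / hn" using that(1) by (subst pos_le_divide_eq[OF hn])
    moreover have "s / hn < real i + 1" using that(2) by (subst pos_divide_less_eq[OF hn]) (simp add: distrib_right)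
    ultimately have "\<lfloor>s / hn\<rfloor> = int i" by (intro floor_unique) auto
    then show ?thesis by (simp add: k_def)
  qed
  show ?thesis using k1 k2 k3 uniq by blast
qed


lemma nn_sec_meas:
  fixes F :: "real \<times> 'a \<Rightarrow> ennreal"
  assumes "F \<in> borel_measurable (lborel \<Otimes>\<^sub>M M)"
  shows "(\<lambda>\<omega>. \<integral>\<^sup>+s. F (s, \<omega>) \<partial>lborel) \<in> borel_measurable M"
proof -
  have "(\<lambda>(\<omega>, s). F (s, \<omega>)) \<in> borel_measurable (M \<Otimes>\<^sub>M lborel)"
    using measurable_pair_swap[OF assms] by simp
  from lborel.borel_measurable_nn_integral_fst[OF this] show ?thesis by simp
qed

lemma W_facts:
  fixes B :: "real \<Rightarrow> 'a \<Rightarrow> real^'d"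
  assumes BM: "brownian_motion M B" and t: "0 \<le> t" and h: "0 < h"
  shows "(\<lambda>\<omega>. \<integral>\<^sup>+s. indicator {t..t+h} s * ennreal ((norm (B s \<omega> - B t \<omega>))^2) \<partial>lborel) \<in> borel_measurable M"
    and "(\<integral>\<^sup>+\<omega>. (\<integral>\<^sup>+s. indicator {t..t+h} s * ennreal ((norm (B s \<omega> - B t \<omega>))^2) \<partial>lborel) \<partial>M)
          \<le> ennreal (real CARD('d) * h^2)"
proof -
  interpret M: prob_space M using BM unfolding brownian_motion_def by auto
  interpret P: pair_sigma_finite lborel M
    by (simp add: pair_sigma_finite_def lborel.sigma_finite_measure_axioms M.sigma_finite_measure_axioms)
  have meas: "\<And>r. B r \<in> borel_measurable M" using BM unfolding brownian_motion_def by auto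
  define F where "F p = indicator {t..t+h} (fst p) * ennreal ((norm (B (max 0 (fst p)) (snd p) - B t (snd p)))^2)"
    for p :: "real \<times> 'a"
  have Fm: "F \<in> borel_measurable (lborel \<Otimes>\<^sub>M M)"
  proof -
    have [measurable]: "(\<lambda>p. B (max 0 (fst p)) (snd p)) \<in> borel_measurable (lborel \<Otimes>\<^sub>M M)"
      by (rule B_joint[OF BM])
    have [measurable]: "B t \<in> borel_measurable M" by (rule meas)
    show ?thesis unfolding F_def by measurable
  qed
  have eq: "(\<integral>\<^sup>+s. indicator {t..t+h} s * ennreal ((norm (B s \<omega> - B t \<omega>))^2) \<partial>lborel) = (\<integral>\<^sup>+s. F (s, \<omega>) \<partial>lborel)" for \<omega>
    unfolding F_def using t by (intro nn_integral_cong) (auto split: split_indicator simp: max_def)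
  show "(\<lambda>\<omega>. \<integral>\<^sup>+s. indicator {t..t+h} s * ennreal ((norm (B s \<omega> - B t \<omega>))^2) \<partial>lborel) \<in> borel_measurable M"
    unfolding eq by (rule nn_sec_meas[OF Fm])
  have "(\<integral>\<^sup>+\<omega>. (\<integral>\<^sup>+s. indicator {t..t+h} s * ennreal ((norm (B s \<omega> - B t \<omega>))^2) \<partial>lborel) \<partial>M)
      = (\<integral>\<^sup>+\<omega>. (\<integral>\<^sup>+s. F (s, \<omega>) \<partial>lborel) \<partial>M)" unfolding eq ..
  also have "\<dots> = (\<integral>\<^sup>+s. (\<integral>\<^sup>+\<omega>. F (s, \<omega>) \<partial>M) \<partial>lborel)"
    using P.Fubini'[of "\<lambda>s \<omega>. F (s, \<omega>)"] Fm by simp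
  also have "\<dots> \<le> (\<integral>\<^sup>+s. indicator {t..t+h} s * ennreal (real CARD('d) * h) \<partial>lborel)"
  proof (rule nn_integral_mono)
    fix s :: real
    show "(\<integral>\<^sup>+\<omega>. F (s, \<omega>) \<partial>M) \<le> indicator {t..t+h} s * ennreal (real CARD('d) * h)"
    proof (cases "s \<in> {t..t+h}")
      case True
      then have s0: "max 0 s = s" using t by auto
      have "(\<integral>\<^sup>+\<omega>. F (s, \<omega>) \<partial>M) = (\<integral>\<^sup>+\<omega>. ennreal ((norm (B s \<omega> - B t \<omega>))^2) \<partial>M)"
        unfolding F_def using True s0 by simp
      also have "\<dots> = ennreal (real CARD('d) * (s - t))"
        using True t by (intro bm_moment[OF BM]) auto
      also have "\<dots> \<le> ennreal (real CARD('d) * h)"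
        using True by (intro ennreal_leI mult_left_mono) auto
      finally show ?thesis using True by simp
    next
      case False
      then show ?thesis unfolding F_def by simp
    qed
  qed
  also have "\<dots> = ennreal (real CARD('d) * h) * ennreal h" using h by (subst intconst) auto
  also have "\<dots> = ennreal (real CARD('d) * h^2)" using h by (simp add: ennreal_mult[symmetric] power2_eq_square mult.assoc)
  finally show "(\<integral>\<^sup>+\<omega>. (\<integral>\<^sup>+s. indicator {t..t+h} s * ennreal ((norm (B s \<omega> - B t \<omega>))^2) \<partial>lborel) \<partial>M)
          \<le> ennreal (real CARD('d) * h^2)" .
qed

theorem lemma4p3:
  fixes M :: "'a measure"
    and B :: "real \<Rightarrow> 'a \<Rightarrow> real^'d"
    and T :: real and \<mu> :: real
    and f :: "'a \<Rightarrow> real \<Rightarrow> real \<Rightarrow> real^'d \<Rightarrow> real"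
    and Y :: "real \<Rightarrow> real \<Rightarrow> real^'d \<Rightarrow> real \<Rightarrow> 'a \<Rightarrow> real"
    and y :: real and z :: "real^'d"
  assumes BM: "brownian_motion M B"
    and T_pos: "T > 0"
    and f_L2: "\<And>y z. L2F M B T (\<lambda>s \<omega>. f \<omega> s y z)"
    and mu_pos: "\<mu> > 0"
    and f_Lip: "\<And>\<omega> t y y' z z'. \<omega> \<in> space M \<Longrightarrow> t \<in> {0..T} \<Longrightarrow>
                 \<bar>f \<omega> t y z - f \<omega> t y' z'\<bar> \<le> \<mu> * (\<bar>y - y'\<bar> + norm (z - z'))"
    and Y_meas: "\<And>t y z. t \<in> {0..T} \<Longrightarrow>
                 (\<lambda>(s, \<omega>). Y t y z s \<omega>) \<in> borel_measurable (restrict_space lborel {t..T} \<Otimes>\<^sub>M M)"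
    and Y_adapted: "\<And>t y z s. t \<in> {0..T} \<Longrightarrow> s \<in> {t..T} \<Longrightarrow>
                 Y t y z s \<in> borel_measurable (nat_filtration M B s)"
    and Y_sol: "\<And>t y z. t \<in> {0..T} \<Longrightarrow>
                 AE \<omega> in M. \<forall>s\<in>{t..T}.
                    set_integrable lborel {t..s} (\<lambda>r. f \<omega> r (Y t y z r \<omega>) z) \<and>
                    Y t y z s \<omega> = y - (LINT r:{t..s}|lborel. f \<omega> r (Y t y z r \<omega>) z)
                                     + z \<bullet> (B s \<omega> - B t \<omega>)"
  shows "(\<lambda>n. \<integral>\<^sup>+\<omega>. (\<integral>\<^sup>+s. indicator {0..T} s *
             ennreal ((fn_approx f Y T n \<omega> s y z - f \<omega> s y z)\<^sup>2) \<partial>lborel) \<partial>M)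
         \<longlonglongrightarrow> 0"
  proof -
  interpret M: prob_space M using BM unfolding brownian_motion_def by auto
  define h where "h n = T / 2^n" for n :: nat
  have hpos: "0 < h n" for n using T_pos by (simp add: h_def)
  have dy: "dyad T n i = real i * h n" for n i by (simp add: dyad_def h_def)
  have dyS: "dyad T n (Suc i) = dyad T n i + h n" for n i by (simp add: dy algebra_simps)
  define G where "G \<omega> = (\<integral>\<^sup>+s. indicator {0..T} s * ennreal ((f \<omega> s y z)^2) \<partial>lborel)" for \<omega>
  define C where "C = (\<integral>\<^sup>+\<omega>. G \<omega> \<partial>M)"
  have Cfin: "C < top" using f_L2[of y z] unfolding L2F_def C_def G_def by simp
  define C' where "C' = enn2real C"
  have C_eq: "C = ennreal C'" unfolding C'_def using Cfin by simp
  have C'0: "0 \<le> C'" by (simp add: C'_def)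
  define d where "d = real CARD('d)"
  define Wi where "Wi n i \<omega> = (\<integral>\<^sup>+s. indicator {dyad T n i..dyad T n i + h n} s *
        ennreal ((norm (B s \<omega> - B (dyad T n i) \<omega>))^2) \<partial>lborel)" for n i \<omega>
  define P where "P n \<omega> = (\<integral>\<^sup>+s. indicator {0..T} s *
             ennreal ((fn_approx f Y T n \<omega> s y z - f \<omega> s y z)\<^sup>2) \<partial>lborel)" for n \<omega>
  define K where "K = 6 * \<mu>^2 * T * (C' + (norm z)^2 * d)"
  have fj: "(\<lambda>(s, \<omega>). f \<omega> s y z) \<in> borel_measurable (restrict_space lborel {0..T} \<Otimes>\<^sub>M M)"
    using f_L2[of y z] unfolding L2F_def by simp
  have Gmeas: "G \<in> borel_measurable M"
  proof -
    have "(\<lambda>x. indicator {0..T} (fst x) * (case x of (s, \<omega>) \<Rightarrow> f \<omega> s y z)) \<in> borel_measurable (lborel \<Otimes>\<^sub>M M)"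
      by (rule restr_pair[OF fj])
    then have "(\<lambda>x. ennreal ((indicator {0..T} (fst x) * (case x of (s, \<omega>) \<Rightarrow> f \<omega> s y z))^2)) \<in> borel_measurable (lborel \<Otimes>\<^sub>M M)"
      by measurable
    from nn_sec_meas[OF this]
    have "(\<lambda>\<omega>. \<integral>\<^sup>+s. ennreal ((indicator {0..T} s * f \<omega> s y z)^2) \<partial>lborel) \<in> borel_measurable M" by simp
    moreover have "(\<lambda>\<omega>. \<integral>\<^sup>+s. ennreal ((indicator {0..T} s * f \<omega> s y z)^2) \<partial>lborel) = G"
      unfolding G_def by (intro ext nn_integral_cong) (auto split: split_indicator)
    ultimately show ?thesis by simp
  qed
  have dy0: "0 \<le> dyad T n i" for n i using T_pos by (simp add: dyad_def)
  have Wmeas: "Wi n i \<in> borel_measurable M" if "i < 2^n" for n i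
    unfolding Wi_def[abs_def] using W_facts(1)[OF BM dy0 hpos] by simp
  have EW: "(\<integral>\<^sup>+\<omega>. Wi n i \<omega> \<partial>M) \<le> ennreal (d * (h n)^2)" if "i < 2^n" for n i
    unfolding Wi_def d_def using W_facts(2)[OF BM dy0 hpos] by simp
  have hT: "2^n * h n = T" for n by (simp add: h_def)
  have tiT: "dyad T n i + h n \<le> T" if "i < 2^n" for n i
  proof -
    have "real (Suc i) \<le> 2^n" using that
      by (metis Suc_leI of_nat_le_iff of_nat_numeral of_nat_power)
    then have "real (Suc i) * h n \<le> 2^n * h n" using hpos[of n] by (intro mult_right_mono) auto
    then show ?thesis using hT[of n] by (simp add: dy algebra_simps)
  qed
  have K3: "AE \<omega> in M. P n \<omega> \<le> (\<Sum>i<2^n. ennreal (6*\<mu>^2*(h n)^2) * G \<omega> + ennreal (6*\<mu>^2*(norm z)^2) * Wi n i \<omega>)"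
    if small: "\<mu>^2 * (h n)^2 \<le> 1/6" for n
  proof -
    define t where "t i = dyad T n i" for i
    define hn where "hn = h n"
    have hn: "0 < hn" by (simp add: hn_def hpos)
    have tT: "t i + hn \<le> T" if "i < 2^n" for i using tiT[OF that] by (simp add: t_def hn_def)
    have t0: "0 \<le> t i" for i by (simp add: t_def dy0)
    have AEsol: "AE \<omega> in M. \<forall>i\<in>{..<2^n}. (\<forall>s\<in>{t i..T}.
                    set_integrable lborel {t i..s} (\<lambda>r. f \<omega> r (Y (t i) y z r \<omega>) z) \<and>
                    Y (t i) y z s \<omega> = y - (LINT r:{t i..s}|lborel. f \<omega> r (Y (t i) y z r \<omega>) z)
                                     + z \<bullet> (B s \<omega> - B (t i) \<omega>))"
    proof (rule AE_finite_allI)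
      fix i assume "i \<in> {..<(2::nat)^n}"
      then have "t i \<in> {0..T}" using tT[of i] t0[of i] hn by auto
      then show "AE \<omega> in M. \<forall>s\<in>{t i..T}.
                    set_integrable lborel {t i..s} (\<lambda>r. f \<omega> r (Y (t i) y z r \<omega>) z) \<and>
                    Y (t i) y z s \<omega> = y - (LINT r:{t i..s}|lborel. f \<omega> r (Y (t i) y z r \<omega>) z)
                                     + z \<bullet> (B s \<omega> - B (t i) \<omega>)"
        by (rule Y_sol)
    qed simp
    have AEG: "AE \<omega> in M. G \<omega> \<noteq> \<infinity>"
      using Gmeas Cfin unfolding C_def by (intro nn_integral_PInf_AE) auto
    show ?thesis
      using AE_space AEsol AEG
    proof eventually_elim
      case (elim \<omega>)
      then have \<omega>: "\<omega> \<in> space M" and solw: "\<And>i s. i < 2^n \<Longrightarrow> s \<in> {t i..T} \<Longrightarrow>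
                    set_integrable lborel {t i..s} (\<lambda>r. f \<omega> r (Y (t i) y z r \<omega>) z) \<and>
                    Y (t i) y z s \<omega> = y - (LINT r:{t i..s}|lborel. f \<omega> r (Y (t i) y z r \<omega>) z)
                                     + z \<bullet> (B s \<omega> - B (t i) \<omega>)"
        and Gw: "G \<omega> < top" by (auto simp: top.not_eq_extremum)
      define a where "a = ennreal (6*\<mu>^2*(h n)^2)"
      define b where "b = ennreal (6*\<mu>^2*(norm z)^2)"
      define Yf where "Yf i s = indicator {t i..T} s * Y (t i) y z s \<omega>" for i s
      define g0 where "g0 s = indicator {0..T} s * f \<omega> s y z" for s
      have g0m: "g0 \<in> borel_measurable borel"
        using sec_meas[OF fj \<omega>] by (simp add: g0_def[abs_def])
      have tiT: "t i \<in> {0..T}" if "i < 2^n" for i using tT[OF that] t0[of i] hn by auto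
      have Yfm: "Yf i \<in> borel_measurable borel" if "i < 2^n" for i
        using sec_meas[OF Y_meas[OF tiT[OF that], of y z] \<omega>] by (simp add: Yf_def[abs_def])
      have Bcont: "continuous_on {0..} (\<lambda>s. B s \<omega>)" using BM \<omega> unfolding brownian_motion_def by auto
      have mu0: "0 \<le> \<mu>" using mu_pos by simp
      have Bi: "(\<integral>\<^sup>+s. indicator {t i..t i + hn} s * ennreal (\<mu>^2 * (Y (t i) y z s \<omega> - y)^2) \<partial>lborel)
                 \<le> a * G \<omega> + b * Wi n i \<omega>" if i: "i < 2^n" for i
      proof -
        define I where "I = {t i..t i + hn}"
        have It: "I \<subseteq> {t i..T}" "I \<subseteq> {0..T}" using tT[OF i] t0[of i] hn by (auto simp: I_def)
        define \<beta> where "\<beta> s = z \<bullet> (B s \<omega> - B (t i) \<omega>)" for s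
        define F where "F r = f \<omega> r (Y (t i) y z r \<omega>) z" for r
        have Bc: "continuous_on I (\<lambda>s. B s \<omega>)"
          using Bcont by (rule continuous_on_subset) (use It in auto)
        have bc: "continuous_on {t i..t i + hn} \<beta>"
          unfolding \<beta>_def using Bc unfolding I_def by (intro continuous_intros) auto
        have Gi: "(\<integral>\<^sup>+s. indicator {t i..t i + hn} s * ennreal ((g0 s)^2) \<partial>lborel) \<le> G \<omega>"
          unfolding G_def
        proof (rule nn_integral_mono)
          fix s :: real
          show "indicator {t i..t i + hn} s * ennreal ((g0 s)^2) \<le> indicator {0..T} s * ennreal ((f \<omega> s y z)^2)"
            using It by (cases "s \<in> I") (auto simp: I_def g0_def)
        qed
        have Gfin: "(\<integral>\<^sup>+s. indicator {t i..t i + hn} s * ennreal ((g0 s)^2) \<partial>lborel) < \<infinity>"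
          using le_less_trans[OF Gi Gw] by simp
        have Lip: "\<bar>F r - g0 r\<bar> \<le> \<mu> * \<bar>Yf i r - y\<bar>" if r: "r \<in> {t i..t i + hn}" for r
        proof -
          have r': "r \<in> {0..T}" "r \<in> {t i..T}" using r It by (auto simp: I_def)
          have "\<bar>f \<omega> r (Y (t i) y z r \<omega>) z - f \<omega> r y z\<bar> \<le> \<mu> * (\<bar>Y (t i) y z r \<omega> - y\<bar> + norm (z - z))"
            by (rule f_Lip[OF \<omega> r'(1)])
          then show ?thesis using r' by (simp add: F_def g0_def Yf_def)
        qed
        have sol: "set_integrable lborel {t i..s} F \<and> Yf i s = y - (LINT r:{t i..s}|lborel. F r) + \<beta> s"
          if s: "s \<in> {t i..t i + hn}" for s
        proof -
          have s': "s \<in> {t i..T}" using s It by (auto simp: I_def)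
          show ?thesis using solw[OF i s'] s' unfolding F_def \<beta>_def Yf_def by simp
        qed
        have cr: "(\<integral>\<^sup>+s. indicator {t i..t i + hn} s * ennreal ((Yf i s - y)^2) \<partial>lborel)
          \<le> ennreal (6*hn^2) * (\<integral>\<^sup>+s. indicator {t i..t i + hn} s * ennreal ((g0 s)^2) \<partial>lborel)
            + 6 * (\<integral>\<^sup>+s. indicator {t i..t i + hn} s * ennreal ((\<beta> s)^2) \<partial>lborel)"
          using small unfolding hn_def[symmetric]
          by (intro core[OF hn mu0 _ g0m Yfm[OF i] bc Gfin Lip sol]) auto
        have mB: "(\<lambda>s. indicator I s * ennreal ((norm (B s \<omega> - B (t i) \<omega>))^2)) \<in> borel_measurable lborel"
        proof -
          have "continuous_on I (\<lambda>s. B s \<omega> - B (t i) \<omega>)" using Bc by (intro continuous_intros)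
          then have "(\<lambda>s. indicator I s *\<^sub>R (B s \<omega> - B (t i) \<omega>)) \<in> borel_measurable borel"
            unfolding I_def by (intro borel_measurable_continuous_on_indicator) auto
          then have "(\<lambda>s. ennreal ((norm (indicator I s *\<^sub>R (B s \<omega> - B (t i) \<omega>)))^2)) \<in> borel_measurable lborel"
            unfolding measurable_lborel2 by measurable
          moreover have "(\<lambda>s. ennreal ((norm (indicator I s *\<^sub>R (B s \<omega> - B (t i) \<omega>)))^2))
              = (\<lambda>s. indicator I s * ennreal ((norm (B s \<omega> - B (t i) \<omega>))^2))"
            by (auto simp: fun_eq_iff split: split_indicator)
          ultimately show ?thesis by metis
        qed
        have Wb: "(\<integral>\<^sup>+s. indicator {t i..t i + hn} s * ennreal ((\<beta> s)^2) \<partial>lborel) \<le> ennreal ((norm z)^2) * Wi n i \<omega>"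
        proof -
          have "(\<integral>\<^sup>+s. indicator {t i..t i + hn} s * ennreal ((\<beta> s)^2) \<partial>lborel)
              \<le> (\<integral>\<^sup>+s. ennreal ((norm z)^2) * (indicator I s * ennreal ((norm (B s \<omega> - B (t i) \<omega>))^2)) \<partial>lborel)"
          proof (rule nn_integral_mono)
            fix s :: real
            have "\<bar>\<beta> s\<bar> \<le> norm z * norm (B s \<omega> - B (t i) \<omega>)" unfolding \<beta>_def by (rule Cauchy_Schwarz_ineq2)
            then have "\<bar>\<beta> s\<bar>^2 \<le> (norm z * norm (B s \<omega> - B (t i) \<omega>))^2" by (intro power_mono) auto
            then have "(\<beta> s)^2 \<le> (norm z)^2 * (norm (B s \<omega> - B (t i) \<omega>))^2" by (simp add: power_mult_distrib)
            then have "ennreal ((\<beta> s)^2) \<le> ennreal ((norm z)^2) * ennreal ((norm (B s \<omega> - B (t i) \<omega>))^2)"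
              by (simp add: ennreal_mult[symmetric] ennreal_leI)
            then show "indicator {t i..t i + hn} s * ennreal ((\<beta> s)^2)
                \<le> ennreal ((norm z)^2) * (indicator I s * ennreal ((norm (B s \<omega> - B (t i) \<omega>))^2))"
              by (cases "s \<in> I") (auto simp: I_def)
          qed
          also have "\<dots> = ennreal ((norm z)^2) * Wi n i \<omega>"
            using mB by (simp add: nn_integral_cmult Wi_def I_def t_def hn_def)
          finally show ?thesis .
        qed
        have "(\<integral>\<^sup>+s. indicator {t i..t i + hn} s * ennreal (\<mu>^2 * (Y (t i) y z s \<omega> - y)^2) \<partial>lborel)
            = (\<integral>\<^sup>+s. ennreal (\<mu>^2) * (indicator {t i..t i + hn} s * ennreal ((Yf i s - y)^2)) \<partial>lborel)"
        proof (rule nn_integral_cong)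
          fix s :: real
          show "indicator {t i..t i + hn} s * ennreal (\<mu>^2 * (Y (t i) y z s \<omega> - y)^2)
              = ennreal (\<mu>^2) * (indicator {t i..t i + hn} s * ennreal ((Yf i s - y)^2))"
            using It by (cases "s \<in> I") (auto simp: I_def Yf_def ennreal_mult)
        qed
        also have "\<dots> = ennreal (\<mu>^2) * (\<integral>\<^sup>+s. indicator {t i..t i + hn} s * ennreal ((Yf i s - y)^2) \<partial>lborel)"
        proof -
          have "(\<lambda>s. indicator {t i..t i + hn} s * ennreal ((Yf i s - y)^2)) \<in> borel_measurable lborel"
            using Yfm[OF i] unfolding measurable_lborel2 by measurable
          then show ?thesis by (rule nn_integral_cmult)
        qed
        also have "\<dots> \<le> ennreal (\<mu>^2) * (ennreal (6*hn^2) * G \<omega> + 6 * (ennreal ((norm z)^2) * Wi n i \<omega>))"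
        proof -
          have "ennreal (6*hn^2) * (\<integral>\<^sup>+s. indicator {t i..t i + hn} s * ennreal ((g0 s)^2) \<partial>lborel)
            + 6 * (\<integral>\<^sup>+s. indicator {t i..t i + hn} s * ennreal ((\<beta> s)^2) \<partial>lborel)
            \<le> ennreal (6*hn^2) * G \<omega> + 6 * (ennreal ((norm z)^2) * Wi n i \<omega>)"
            by (intro add_mono mult_left_mono Gi Wb) auto
          with cr show ?thesis by (intro mult_left_mono) auto
        qed
        also have "\<dots> = a * G \<omega> + b * Wi n i \<omega>"
        proof -
          have e1: "ennreal (\<mu>^2) * ennreal (6*hn^2) = a"
          proof -
            have "ennreal (\<mu>^2) * ennreal (6*hn^2) = ennreal (\<mu>^2 * (6*hn^2))"
              by (rule ennreal_mult[symmetric]) auto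
            also have "\<mu>^2 * (6*hn^2) = 6*\<mu>^2*(h n)^2" by (simp add: hn_def)
            finally show ?thesis unfolding a_def .
          qed
          have e2: "ennreal (\<mu>^2) * 6 * ennreal ((norm z)^2) = b"
          proof -
            have "ennreal (\<mu>^2) * 6 * ennreal ((norm z)^2) = ennreal (\<mu>^2) * ennreal 6 * ennreal ((norm z)^2)"
              by simp
            also have "\<dots> = ennreal (\<mu>^2 * 6) * ennreal ((norm z)^2)"
              by (subst ennreal_mult[symmetric]) auto
            also have "\<dots> = ennreal (\<mu>^2 * 6 * (norm z)^2)"
              by (rule ennreal_mult[symmetric]) auto
            also have "\<mu>^2 * 6 * (norm z)^2 = 6*\<mu>^2*(norm z)^2" by simp
            finally show ?thesis unfolding b_def .
          qed
          show ?thesis by (simp only: distrib_left mult.assoc[symmetric] e1 e2)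
        qed
        finally show ?thesis .
      qed
      have mi: "(\<lambda>s. indicator {t i..t i + hn} s * ennreal (\<mu>^2 * (Y (t i) y z s \<omega> - y)^2)) \<in> borel_measurable lborel"
        if i: "i < 2^n" for i
      proof -
        have "(\<lambda>s. indicator {t i..t i + hn} s * ennreal (\<mu>^2 * (Yf i s - y)^2)) \<in> borel_measurable lborel"
          using Yfm[OF i] unfolding measurable_lborel2 by measurable
        moreover have "(\<lambda>s. indicator {t i..t i + hn} s * ennreal (\<mu>^2 * (Yf i s - y)^2))
            = (\<lambda>s. indicator {t i..t i + hn} s * ennreal (\<mu>^2 * (Y (t i) y z s \<omega> - y)^2))"
        proof (intro ext)
          fix s
          show "indicator {t i..t i + hn} s * ennreal (\<mu>^2 * (Yf i s - y)^2)
            = indicator {t i..t i + hn} s * ennreal (\<mu>^2 * (Y (t i) y z s \<omega> - y)^2)"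
          proof (cases "s \<in> {t i..t i + hn}")
            case True
            then have "s \<in> {t i..T}" using tT[OF i] by auto
            then show ?thesis by (simp add: Yf_def)
          qed simp
        qed
        ultimately show ?thesis by metis
      qed
      have PW: "AE s in lborel. indicator {0..T} s * ennreal ((fn_approx f Y T n \<omega> s y z - f \<omega> s y z)\<^sup>2)
          \<le> (\<Sum>i<2^n. indicator {t i..t i + hn} s * ennreal (\<mu>^2 * (Y (t i) y z s \<omega> - y)^2))"
        using AE_lborel_singleton[of T]
      proof eventually_elim
        case (elim s)
        show ?case
        proof (cases "s \<in> {0..T}")
          case False then show ?thesis by simp
        next
          case True
          with elim have s: "0 \<le> s" "s < T" by auto
          have "s < real (2^n) * hn" using s hT[of n] by (simp add: hn_def)
          from pick[OF hn s(1) this] obtain k where k3: "k < 2^n" and k1': "real k * hn \<le> s"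
            and k2': "s < real k * hn + hn"
            and uniq: "\<And>i. real i * hn \<le> s \<Longrightarrow> s < real i * hn + hn \<Longrightarrow> i = k" by blast
          have tdef: "t i = real i * hn" for i by (simp add: t_def dy hn_def)
          have k1: "t k \<le> s" and k2: "s < t k + hn" using k1' k2' by (simp_all add: tdef)
          have fnk: "fn_approx f Y T n \<omega> s y z = f \<omega> s (Y (t k) y z s \<omega>) z"
          proof -
            have "fn_approx f Y T n \<omega> s y z = (\<Sum>i<2^n. f \<omega> s (Y (t i) y z s \<omega>) z * indicator {t i..<t i + hn} s)"
              unfolding fn_approx_def by (simp add: dyS t_def hn_def)
            also have "\<dots> = f \<omega> s (Y (t k) y z s \<omega>) z * indicator {t k..<t k + hn} s
                + (\<Sum>i\<in>{..<2^n} - {k}. f \<omega> s (Y (t i) y z s \<omega>) z * indicator {t i..<t i + hn} s)"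
              using k3 by (subst sum.remove[of _ k]) auto
            also have "(\<Sum>i\<in>{..<2^n} - {k}. f \<omega> s (Y (t i) y z s \<omega>) z * indicator {t i..<t i + hn} s) = 0"
            proof (rule sum.neutral, intro ballI)
              fix i assume i: "i \<in> {..<2^n} - {k}"
              have "s \<notin> {t i..<t i + hn}"
              proof
                assume "s \<in> {t i..<t i + hn}"
                then have "i = k" using uniq[of i] by (simp add: tdef)
                then show False using i by simp
              qed
              then show "f \<omega> s (Y (t i) y z s \<omega>) z * indicator {t i..<t i + hn} s = 0" by simp
            qed
            finally show ?thesis using k1 k2 by simp
          qed
          have "\<bar>f \<omega> s (Y (t k) y z s \<omega>) z - f \<omega> s y z\<bar> \<le> \<mu> * (\<bar>Y (t k) y z s \<omega> - y\<bar> + norm (z - z))"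
            by (rule f_Lip[OF \<omega> True])
          then have "\<bar>fn_approx f Y T n \<omega> s y z - f \<omega> s y z\<bar> \<le> \<mu> * \<bar>Y (t k) y z s \<omega> - y\<bar>" by (simp add: fnk)
          then have "\<bar>fn_approx f Y T n \<omega> s y z - f \<omega> s y z\<bar>^2 \<le> (\<mu> * \<bar>Y (t k) y z s \<omega> - y\<bar>)^2"
            by (intro power_mono) auto
          then have sq: "(fn_approx f Y T n \<omega> s y z - f \<omega> s y z)^2 \<le> \<mu>^2 * (Y (t k) y z s \<omega> - y)^2"
            by (simp add: power_mult_distrib)
          have "indicator {0..T} s * ennreal ((fn_approx f Y T n \<omega> s y z - f \<omega> s y z)\<^sup>2)
              \<le> indicator {t k..t k + hn} s * ennreal (\<mu>^2 * (Y (t k) y z s \<omega> - y)^2)"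
            using True k1 k2 sq by (simp add: ennreal_leI)
          also have "\<dots> \<le> (\<Sum>i<2^n. indicator {t i..t i + hn} s * ennreal (\<mu>^2 * (Y (t i) y z s \<omega> - y)^2))"
            using k3 by (intro member_le_sum) auto
          finally show ?thesis .
        qed
      qed
      have "P n \<omega> \<le> (\<integral>\<^sup>+s. (\<Sum>i<2^n. indicator {t i..t i + hn} s * ennreal (\<mu>^2 * (Y (t i) y z s \<omega> - y)^2)) \<partial>lborel)"
        unfolding P_def using PW by (rule nn_integral_mono_AE)
      also have "\<dots> = (\<Sum>i<2^n. (\<integral>\<^sup>+s. indicator {t i..t i + hn} s * ennreal (\<mu>^2 * (Y (t i) y z s \<omega> - y)^2) \<partial>lborel))"
        using mi by (intro nn_integral_sum) auto
      also have "\<dots> \<le> (\<Sum>i<2^n. a * G \<omega> + b * Wi n i \<omega>)"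
        using Bi by (intro sum_mono) auto
      finally show ?case unfolding a_def b_def .
    qed
  qed
  have K4: "(\<integral>\<^sup>+\<omega>. P n \<omega> \<partial>M) \<le> ennreal (K * h n)" if small: "\<mu>^2 * (h n)^2 \<le> 1/6" for n
  proof -
    have "(\<integral>\<^sup>+\<omega>. P n \<omega> \<partial>M) \<le> (\<integral>\<^sup>+\<omega>. (\<Sum>i<2^n. ennreal (6*\<mu>^2*(h n)^2) * G \<omega> + ennreal (6*\<mu>^2*(norm z)^2) * Wi n i \<omega>) \<partial>M)"
      using K3[OF small] by (rule nn_integral_mono_AE)
    also have "\<dots> = (\<Sum>i<2^n. ennreal (6*\<mu>^2*(h n)^2) * C + ennreal (6*\<mu>^2*(norm z)^2) * (\<integral>\<^sup>+\<omega>. Wi n i \<omega> \<partial>M))"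
    proof -
      have mi: "(\<lambda>\<omega>. ennreal (6*\<mu>^2*(h n)^2) * G \<omega> + ennreal (6*\<mu>^2*(norm z)^2) * Wi n i \<omega>) \<in> borel_measurable M"
        if "i \<in> {..<2^n}" for i
      proof -
        have [measurable]: "Wi n i \<in> borel_measurable M" using Wmeas that by simp
        show ?thesis using Gmeas by measurable
      qed
      have "(\<integral>\<^sup>+\<omega>. (\<Sum>i<2^n. ennreal (6*\<mu>^2*(h n)^2) * G \<omega> + ennreal (6*\<mu>^2*(norm z)^2) * Wi n i \<omega>) \<partial>M)
          = (\<Sum>i<2^n. (\<integral>\<^sup>+\<omega>. ennreal (6*\<mu>^2*(h n)^2) * G \<omega> + ennreal (6*\<mu>^2*(norm z)^2) * Wi n i \<omega> \<partial>M))"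
        using mi by (rule nn_integral_sum)
      also have "\<dots> = (\<Sum>i<2^n. ennreal (6*\<mu>^2*(h n)^2) * C + ennreal (6*\<mu>^2*(norm z)^2) * (\<integral>\<^sup>+\<omega>. Wi n i \<omega> \<partial>M))"
      proof (rule sum.cong[OF refl])
        fix i :: nat assume i: "i \<in> {..<2^n}"
        have m1: "(\<lambda>\<omega>. ennreal (6*\<mu>^2*(h n)^2) * G \<omega>) \<in> borel_measurable M" using Gmeas by measurable
        have [measurable]: "Wi n i \<in> borel_measurable M" using Wmeas i by simp
        have m2: "(\<lambda>\<omega>. ennreal (6*\<mu>^2*(norm z)^2) * Wi n i \<omega>) \<in> borel_measurable M" by measurable
        show "(\<integral>\<^sup>+\<omega>. ennreal (6*\<mu>^2*(h n)^2) * G \<omega> + ennreal (6*\<mu>^2*(norm z)^2) * Wi n i \<omega> \<partial>M)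
           = ennreal (6*\<mu>^2*(h n)^2) * C + ennreal (6*\<mu>^2*(norm z)^2) * (\<integral>\<^sup>+\<omega>. Wi n i \<omega> \<partial>M)"
          unfolding C_def using Gmeas Wmeas[of i n] i
          by (simp add: nn_integral_add[OF m1 m2] nn_integral_cmult)
      qed
      finally show ?thesis .
    qed
    also have "\<dots> \<le> (\<Sum>i<(2::nat)^n. ennreal (6*\<mu>^2*(h n)^2) * C + ennreal (6*\<mu>^2*(norm z)^2) * ennreal (d * (h n)^2))"
      using EW by (intro sum_mono add_mono order_refl mult_left_mono) auto
    also have "\<dots> = ennreal (2^n * (6*\<mu>^2*(h n)^2 * C' + 6*\<mu>^2*(norm z)^2 * (d * (h n)^2)))"
    proof -
      have n1: "0 \<le> 6*\<mu>^2*(h n)^2 * C'" using C'0 by simp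
      have n2: "0 \<le> 6*\<mu>^2*(norm z)^2 * (d * (h n)^2)" by (simp add: d_def)
      have e1: "ennreal (6*\<mu>^2*(h n)^2 * C') = ennreal (6*\<mu>^2*(h n)^2) * C"
        by (simp add: C_eq ennreal_mult C'0)
      have e2: "ennreal (6*\<mu>^2*(norm z)^2 * (d * (h n)^2)) = ennreal (6*\<mu>^2*(norm z)^2) * ennreal (d * (h n)^2)"
        by (simp add: ennreal_mult d_def)
      have e3: "ennreal (6*\<mu>^2*(h n)^2) * C + ennreal (6*\<mu>^2*(norm z)^2) * ennreal (d * (h n)^2)
          = ennreal (6*\<mu>^2*(h n)^2 * C' + 6*\<mu>^2*(norm z)^2 * (d * (h n)^2))"
        using n1 n2 by (simp add: ennreal_plus e1 e2)
      show ?thesis unfolding e3 sum_constant card_lessThan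
        using n1 n2 by (simp add: ennreal_of_nat_eq_real_of_nat ennreal_mult)
    qed
    also have "2^n * (6*\<mu>^2*(h n)^2 * C' + 6*\<mu>^2*(norm z)^2 * (d * (h n)^2)) = K * h n"
    proof -
      have "2^n * (6*\<mu>^2*(h n)^2 * C' + 6*\<mu>^2*(norm z)^2 * (d * (h n)^2))
          = 6*\<mu>^2*(2^n * h n)*(C' + (norm z)^2 * d) * h n"
        by (simp add: power2_eq_square algebra_simps)
      also have "\<dots> = K * h n" unfolding K_def hT by simp
      finally show ?thesis .
    qed
    finally show ?thesis .
  qed
  have hlim: "h \<longlonglongrightarrow> 0"
  proof -
    have "(\<lambda>n. T * (1/2::real)^n) \<longlonglongrightarrow> T * 0"
      by (intro tendsto_mult tendsto_const LIMSEQ_power_zero) auto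
    then show ?thesis by (simp add: h_def[abs_def] power_one_over)
  qed
  have ev: "eventually (\<lambda>n. \<mu>^2 * (h n)^2 \<le> 1/6) sequentially"
  proof -
    have "(\<lambda>n. \<mu>^2 * (h n)^2) \<longlonglongrightarrow> \<mu>^2 * 0^2"
      by (intro tendsto_mult tendsto_const tendsto_power hlim)
    then have "eventually (\<lambda>n. \<mu>^2 * (h n)^2 < 1/6) sequentially"
      by (rule order_tendstoD(2)) simp
    then show ?thesis by eventually_elim simp
  qed
  have "(\<lambda>n. \<integral>\<^sup>+\<omega>. P n \<omega> \<partial>M) \<longlonglongrightarrow> 0"
  proof (rule tendsto_sandwich[of "\<lambda>n. 0" _ _ "\<lambda>n. ennreal (K * h n)"])
    show "\<forall>\<^sub>F n in sequentially. 0 \<le> (\<integral>\<^sup>+\<omega>. P n \<omega> \<partial>M)" by simp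
    show "\<forall>\<^sub>F n in sequentially. (\<integral>\<^sup>+\<omega>. P n \<omega> \<partial>M) \<le> ennreal (K * h n)"
      using ev by eventually_elim (rule K4)
    show "(\<lambda>n. 0) \<longlonglongrightarrow> (0::ennreal)" by simp
    have "(\<lambda>n. ennreal (K * h n)) \<longlonglongrightarrow> ennreal (K * 0)"
      by (intro tendsto_ennrealI tendsto_mult tendsto_const hlim)
    then show "(\<lambda>n. ennreal (K * h n)) \<longlonglongrightarrow> 0" by simp
  qed
  then show ?thesis unfolding P_def .
qed

end
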